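(* In the hierarchical partition construction described in the context, for every level $j$ and every $S\in\mathcal S_j$, the number of sets $S'\in\mathcal S_j$ (including $S$ itself) that $S$ knows is at most $\lambda^{3+\eta}$. Equivalently, $\bigcup\{B_{r_j}(v):v\in S\}$ intersects at most $\lambda^{3+\eta}$ sets of $\mathcal S_j$.
   Context: Let $(V,d)$ be a finite metric space with $|V|\ge 2$ which is doubling with constant $\lambda$: for every $v\in V$ and $r>0$ the open ball $B_{2r}(v)=\{u:d(u,v)<2r\}$ is contained in the union of at most $\lambda$ open balls $B_r(w)$, $w\in V$. Fix an integer $\eta\ge2$ and a real $\tau$ with $1+\frac{1}{2^{\eta-1}-1}\le\tau\le 2^{\eta}$. For $L\subseteq V$ and $r>0$, a greedy partition of $L$ with parameter $r$ is obtained by: set $L_0=L$; while $L_i\ne\emptyset$ choose any $v_i\in L_i$, let $P_i=\{u\in L_i: d(u,v_i)<2^{-\eta-1}r\}$ with leader $v_i$, and set $L_{i+1}=L_i\setminus P_i$. Hierarchical partition construction: choose $r_0$ with $0<r_0<\min_{u\ne v}d(u,v)$ and put $r_j=\tau^j r_0$. Let $\mathcal S_0=\{\{v\}:v\in V\}$, the leader of $\{v\}$ being $v$. While $\mathcal S_j$ has more than one element: let $L_j$ be the set of leaders of the sets in $\mathcal S_j$, let $\mathcal S'_{j+1}$ be a greedy partition of $L_j$ with parameter $2r_{j+1}$, and let $\mathcal S_{j+1}$ consist, for each $P\in\mathcal S'_{j+1}$, of the set $\bigcup\{S\in\mathcal S_j:\mathrm{leader}(S)\in P\}$, whose leader is defined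 to be the leader of $P$. Each $\mathcal S_j$ is a partition of $V$. For $S,S'\in\mathcal S_j$, $S$ knows $S'$ (at level $j$) if there are $v\in S$, $u\in S'$ with $d(v,u)<r_j$; $B_r(v)$ denotes the open ball $\{u\in V:d(u,v)<r\}$. *)

theory Defs
  imports Complex_Main
begin

definition metric_on :: "'a set \<Rightarrow> ('a \<Rightarrow> 'a \<Rightarrow> real) \<Rightarrow> bool" where
  "metric_on V d \<longleftrightarrow>
     (\<forall>u\<in>V. \<forall>v\<in>V. d u v = 0 \<longleftrightarrow> u = v) \<and>
     (\<forall>u\<in>V. \<forall>v\<in>V. d u v = d v u) \<and>
     (\<forall>u\<in>V. \<forall>v\<in>V. \<forall>w\<in>V. d u w \<le> d u v + d v w)"

definition oball :: "'a set \<Rightarrow> ('a \<Rightarrow> 'a \<Rightarrow> real) \<Rightarrow> 'a \<Rightarrow> real \<Rightarrow> 'a set" where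
  "oball V d v r = {u \<in> V. d u v < r}"

definition doubling :: "'a set \<Rightarrow> ('a \<Rightarrow> 'a \<Rightarrow> real) \<Rightarrow> nat \<Rightarrow> bool" where
  "doubling V d lam \<longleftrightarrow>
     (\<forall>v\<in>V. \<forall>r>0. \<exists>W. W \<subseteq> V \<and> card W \<le> lam \<and>
        oball V d v (2 * r) \<subseteq> (\<Union>w\<in>W. oball V d w r))"

text \<open>Greedy partition of L with parameter r (and fixed eta): the result is a set of pairs
  (leader, part). Each run of the nondeterministic greedy procedure yields such a set.\<close>
inductive greedy_part :: "('a \<Rightarrow> 'a \<Rightarrow> real) \<Rightarrow> nat \<Rightarrow> real \<Rightarrow> 'a set \<Rightarrow> ('a \<times> 'a set) set \<Rightarrow> bool"
  for d :: "'a \<Rightarrow> 'a \<Rightarrow> real" and eta :: nat and r :: real where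
  empty: "greedy_part d eta r {} {}"
| step: "\<lbrakk> v \<in> L; P = {u \<in> L. d u v < r / 2 ^ (eta + 1)};
           greedy_part d eta r (L - P) R \<rbrakk>
         \<Longrightarrow> greedy_part d eta r L (insert (v, P) R)"

definition hier_step :: "('a \<Rightarrow> 'a \<Rightarrow> real) \<Rightarrow> nat \<Rightarrow> real \<Rightarrow>
     ('a \<times> 'a set) set \<Rightarrow> ('a \<times> 'a set) set \<Rightarrow> bool" where
  "hier_step d eta rnext Sj Sj' \<longleftrightarrow>
     (\<exists>P'. greedy_part d eta (2 * rnext) (fst ` Sj) P' \<and>
        Sj' = (\<lambda>(l, P). (l, \<Union>{S. \<exists>l'. (l', S) \<in> Sj \<and> l' \<in> P})) ` P')"

text \<open>S 0, ..., S N are the first N+1 levels of a run of the hierarchical partition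
  construction with r_j = tau^j * r0 (the loop body executed while there is more than one set).\<close>
definition hier_run :: "'a set \<Rightarrow> ('a \<Rightarrow> 'a \<Rightarrow> real) \<Rightarrow> nat \<Rightarrow> real \<Rightarrow> real \<Rightarrow>
     (nat \<Rightarrow> ('a \<times> 'a set) set) \<Rightarrow> nat \<Rightarrow> bool" where
  "hier_run V d eta tau r0 S N \<longleftrightarrow>
     0 < r0 \<and> (\<forall>u\<in>V. \<forall>v\<in>V. u \<noteq> v \<longrightarrow> r0 < d u v) \<and>
     S 0 = (\<lambda>v. (v, {v})) ` V \<and>
     (\<forall>j<N. card (S j) > 1 \<and> hier_step d eta (tau ^ (Suc j) * r0) (S j) (S (Suc j)))"

definition knows :: "('a \<Rightarrow> 'a \<Rightarrow> real) \<Rightarrow> real \<Rightarrow> 'a set \<Rightarrow> 'a set \<Rightarrow> bool" where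
  "knows d rj S S' \<longleftrightarrow> (\<exists>v\<in>S. \<exists>u\<in>S'. d v u < rj)"

end

theory Submission
  imports Defs
begin

lemma met_facts:
  assumes "metric_on V d"
  shows "\<And>u. u \<in> V \<Longrightarrow> d u u = 0"
    and "\<And>u v. u \<in> V \<Longrightarrow> v \<in> V \<Longrightarrow> d u v = d v u"
    and "\<And>u v w. u \<in> V \<Longrightarrow> v \<in> V \<Longrightarrow> w \<in> V \<Longrightarrow> d u w \<le> d u v + d v w"
  using assms unfolding metric_on_def by blast+

lemma greedy_props:
  assumes "greedy_part d eta r L R"
  shows "fst ` R \<subseteq> L \<and> (\<forall>p\<in>R. \<forall>u\<in>snd p. d u (fst p) < r / 2^(eta+1)) \<and>
    (\<forall>p\<in>R. \<forall>q\<in>R. p \<noteq> q \<longrightarrow> r/2^(eta+1) \<le> d (fst p) (fst q) \<or> r/2^(eta+1) \<le> d (fst q) (fst p))"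
  using assms
proof induction
  case empty
  then show ?case by simp
next
  case (step v L P R)
  have A: "fst ` R \<subseteq> L - P" using step by blast
  have B: "\<forall>q\<in>R. r/2^(eta+1) \<le> d (fst q) v"
  proof
    fix q assume "q \<in> R"
    then have "fst q \<in> L" "fst q \<notin> P" using A by auto
    then show "r/2^(eta+1) \<le> d (fst q) v" using step(2) by (simp add: not_less)
  qed
  show ?case
  proof (intro conjI)
    show "fst ` insert (v, P) R \<subseteq> L" using A step(1) by auto
    show "\<forall>p\<in>insert (v, P) R. \<forall>u\<in>snd p. d u (fst p) < r / 2 ^ (eta + 1)"
      using step by auto
    show "\<forall>p\<in>insert (v, P) R. \<forall>q\<in>insert (v, P) R. p \<noteq> q \<longrightarrow>
        r / 2 ^ (eta + 1) \<le> d (fst p) (fst q) \<or> r / 2 ^ (eta + 1) \<le> d (fst q) (fst p)"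
      using step(4) B by auto
  qed
qed

lemma cover:
  assumes fin: "finite V" and met: "metric_on V d" and dbl: "doubling V d lam"
  shows "c \<in> V \<Longrightarrow> t > 0 \<Longrightarrow> \<exists>W. W \<subseteq> V \<and> card W \<le> lam^k \<and>
           oball V d c (2^k * t) \<subseteq> (\<Union>w\<in>W. oball V d w t)"
proof (induction k arbitrary: c)
  case 0
  then show ?case by (intro exI[of _ "{c}"]) auto
next
  case (Suc k)
  have pos: "2^k * t > 0" using Suc by simp
  obtain W1 where W1: "W1 \<subseteq> V" "card W1 \<le> lam"
    "oball V d c (2 * (2^k*t)) \<subseteq> (\<Union>w\<in>W1. oball V d w (2^k*t))"
    using dbl[unfolded doubling_def, rule_format, OF Suc(2) pos] by blast
  have ex: "\<forall>w\<in>W1. \<exists>W. W \<subseteq> V \<and> card W \<le> lam^k \<and> oball V d w (2^k * t) \<subseteq> (\<Union>w\<in>W. oball V d w t)"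
  proof
    fix w assume "w \<in> W1"
    then have "w \<in> V" using W1(1) by blast
    then show "\<exists>W. W \<subseteq> V \<and> card W \<le> lam^k \<and> oball V d w (2^k * t) \<subseteq> (\<Union>w\<in>W. oball V d w t)"
      using Suc.IH Suc.prems(2) by blast
  qed
  obtain g where g0: "\<forall>w\<in>W1. g w \<subseteq> V \<and> card (g w) \<le> lam^k \<and>
      oball V d w (2^k * t) \<subseteq> (\<Union>w\<in>g w. oball V d w t)"
    using bchoice[OF ex] by blast
  have g: "\<And>w. w \<in> W1 \<Longrightarrow> g w \<subseteq> V \<and> card (g w) \<le> lam^k \<and>
      oball V d w (2^k * t) \<subseteq> (\<Union>w\<in>g w. oball V d w t)" using g0 by blast
  have fW1: "finite W1" using W1(1) fin finite_subset by blast
  have "card (\<Union>w\<in>W1. g w) \<le> (\<Sum>w\<in>W1. card (g w))" using fW1 by (rule card_UN_le)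
  also have "\<dots> \<le> card W1 * lam^k" using sum_bounded_above[of W1 "\<lambda>w. card (g w)" "lam^k"] g by simp
  also have "\<dots> \<le> lam * lam^k" using W1(2) by (rule mult_right_mono) simp
  finally have cardW: "card (\<Union>w\<in>W1. g w) \<le> lam^Suc k" by simp
  have "oball V d c (2^Suc k * t) = oball V d c (2 * (2^k*t))" by (simp add: mult.assoc)
  also have "\<dots> \<subseteq> (\<Union>w\<in>(\<Union>w\<in>W1. g w). oball V d w t)"
  proof
    fix x assume "x \<in> oball V d c (2 * (2^k*t))"
    then obtain w where w: "w \<in> W1" "x \<in> oball V d w (2^k*t)" using W1(3) by blast
    then obtain w' where "w' \<in> g w" "x \<in> oball V d w' t" using g[OF w(1)] by blast
    then show "x \<in> (\<Union>w\<in>(\<Union>w\<in>W1. g w). oball V d w t)" using w(1) by blast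
  qed
  finally have cov: "oball V d c (2^Suc k * t) \<subseteq> (\<Union>w\<in>(\<Union>w\<in>W1. g w). oball V d w t)" .
  have sub: "(\<Union>w\<in>W1. g w) \<subseteq> V" using g by blast
  show ?case using cardW sub cov by blast
qed

lemma packing:
  assumes fin: "finite V" and met: "metric_on V d" and dbl: "doubling V d lam"
    and c: "c \<in> V" and t: "t > 0" and A: "A \<subseteq> oball V d c (2^k * t)"
    and sep: "\<forall>a\<in>A. \<forall>b\<in>A. a \<noteq> b \<longrightarrow> 2*t \<le> d a b"
  shows "card A \<le> lam^k"
proof -
  obtain W where W: "W \<subseteq> V" "card W \<le> lam^k" "oball V d c (2^k * t) \<subseteq> (\<Union>w\<in>W. oball V d w t)"
    using cover[OF fin met dbl c t, where k=k] by (elim exE conjE) (rule that)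
  define f where "f a = (SOME w. w \<in> W \<and> a \<in> oball V d w t)" for a
  have f: "f a \<in> W \<and> a \<in> oball V d (f a) t" if "a \<in> A" for a
  proof -
    have "\<exists>w. w \<in> W \<and> a \<in> oball V d w t" using that A W(3) by blast
    then show ?thesis unfolding f_def by (rule someI_ex)
  qed
  have "inj_on f A"
  proof (rule inj_onI)
    fix a b assume ab: "a \<in> A" "b \<in> A" "f a = f b"
    show "a = b"
    proof (rule ccontr)
      assume "a \<noteq> b"
      then have "2*t \<le> d a b" using sep ab by blast
      moreover have "a \<in> V" "b \<in> V" "f a \<in> V" "d a (f a) < t" "d b (f a) < t"
        using f[OF ab(1)] f[OF ab(2)] ab(3) W(1) unfolding oball_def by auto
      moreover have "d a b \<le> d a (f a) + d (f a) b" using met_facts(3)[OF met] calculation by blast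
      moreover have "d (f a) b = d b (f a)" using met_facts(2)[OF met] calculation by blast
      ultimately show False by linarith
    qed
  qed
  moreover have "f ` A \<subseteq> W" using f by auto
  moreover have "finite W" using W(1) fin finite_subset by blast
  ultimately have "card A \<le> card W" by (rule card_inj_on_le)
  then show ?thesis using W(2) by linarith
qed

lemma arith_step:
  fixes tau r0 :: real and eta :: nat and j :: nat
  assumes "eta \<ge> 2" and "1 + 1 / (2 ^ (eta - 1) - 1) \<le> tau" and "r0 > 0"
  shows "tau^j*r0/2 + tau^Suc j*r0/2^eta \<le> tau^Suc j*r0/2"
proof -
  define K :: real where "K = 2^(eta-1)"
  have e1: "(1::nat) \<le> eta - 1" using assms(1) by simp
  have K2: "K \<ge> 2" unfolding K_def using power_increasing[OF e1, of "2::real"] by simp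
  have ee: "eta = Suc (eta - 1)" using assms(1) by simp
  have eK: "(2::real)^eta = 2*K" unfolding K_def by (subst ee) (simp only: power_Suc)
  have "1 + 1/(K-1) \<le> tau" using assms(2) unfolding K_def by simp
  then have "(1 + 1/(K-1))*(K-1) \<le> tau*(K-1)" using K2 by (intro mult_right_mono) auto
  moreover have "(1 + 1/(K-1))*(K-1) = K" using K2 by (simp add: field_simps)
  ultimately have h: "K \<le> tau*(K-1)" by simp
  have tpos: "tau > 0" proof (rule ccontr)
    assume "\<not> tau > 0"
    then have "tau*(K-1) \<le> 0" using K2 by (intro mult_nonpos_nonneg) auto
    then show False using h K2 by linarith
  qed
  define a where "a = tau^j*r0"
  have a: "a \<ge> 0" unfolding a_def using tpos assms(3) by simp
  have "a*(K + tau - tau*K) \<le> 0" using a h by (intro mult_nonneg_nonpos) (auto simp: algebra_simps)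
  then have "a/2 + tau*a/(2*K) \<le> tau*a/2" using K2 by (simp add: field_simps)
  then show ?thesis unfolding a_def eK by (simp add: field_simps)
qed


theorem lemma3:
  fixes V :: "'a set" and d :: "'a \<Rightarrow> 'a \<Rightarrow> real" and lam :: nat
    and eta :: nat and tau r0 :: real and S :: "nat \<Rightarrow> ('a \<times> 'a set) set" and N j :: nat
    and l :: 'a and T :: "'a set"
  assumes "finite V" and "card V \<ge> 2" and "metric_on V d" and "doubling V d lam"
    and "eta \<ge> 2"
    and "1 + 1 / (2 ^ (eta - 1) - 1) \<le> tau" and "tau \<le> 2 ^ eta"
    and "hier_run V d eta tau r0 S N"
    and "j \<le> N" and "(l, T) \<in> S j"
  shows "card {T'. (\<exists>l'. (l', T') \<in> S j) \<and> knows d (tau ^ j * r0) T T'} \<le> lam ^ (3 + eta)"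
proof -
  note fin = assms(1) and met = assms(3) and dbl = assms(4)
  note dsym = met_facts(2)[OF met] and dtri = met_facts(3)[OF met] and d0 = met_facts(1)[OF met]
  have r0: "0 < r0" and sep0: "\<forall>u\<in>V. \<forall>v\<in>V. u \<noteq> v \<longrightarrow> r0 < d u v"
    and S0: "S 0 = (\<lambda>v. (v, {v})) ` V"
    and Sstep: "\<And>i. i < N \<Longrightarrow> hier_step d eta (tau ^ (Suc i) * r0) (S i) (S (Suc i))"
    using assms(8) unfolding hier_run_def by auto
  have tpos: "tau > 0"
  proof -
    have "(2::real)^(eta-1) \<ge> 2^1" using assms(5) by (intro power_increasing) auto
    then have "1 / (2 ^ (eta - 1) - 1) > (0::real)" by simp
    then show ?thesis using assms(6) by linarith
  qed
  define Inv where "Inv i \<longleftrightarrow>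
    (\<forall>p\<in>S i. fst p \<in> V \<and> snd p \<subseteq> V \<and> (\<forall>x\<in>snd p. d x (fst p) \<le> tau^i*r0/2)) \<and>
    (\<forall>p\<in>S i. \<forall>q\<in>S i. p \<noteq> q \<longrightarrow> tau^i*r0/2^eta \<le> d (fst p) (fst q))" for i
  have inv: "i \<le> N \<Longrightarrow> Inv i" for i
  proof (induction i)
    case 0
    have "r0/2^eta \<le> r0" using r0 by (simp add: divide_le_eq)
    then show ?case unfolding Inv_def S0 using sep0 r0 d0 by fastforce
  next
    case (Suc i)
    have iN: "i < N" using Suc.prems by simp
    have IH: "Inv i" using Suc.IH iN by simp
    obtain P' where gp: "greedy_part d eta (2 * (tau ^ (Suc i) * r0)) (fst ` S i) P'"
      and SS: "S (Suc i) = (\<lambda>(l, P). (l, \<Union>{S'. \<exists>l'. (l', S') \<in> S i \<and> l' \<in> P})) ` P'"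
      using Sstep[OF iN] unfolding hier_step_def by blast
    define c where "c = 2 * (tau ^ (Suc i) * r0) / 2^(eta+1)"
    have c: "c = tau ^ (Suc i) * r0 / 2^eta" unfolding c_def by simp
    note G = greedy_props[OF gp, folded c_def]
    have A1: "fst p \<in> V \<and> snd p \<subseteq> V \<and> (\<forall>x\<in>snd p. d x (fst p) \<le> tau^Suc i*r0/2)"
      if p: "p \<in> S (Suc i)" for p
    proof -
      obtain l0 P where lP: "(l0, P) \<in> P'" and pe: "p = (l0, \<Union>{S'. \<exists>l'. (l', S') \<in> S i \<and> l' \<in> P})"
        using p SS by auto
      have l0: "l0 \<in> fst ` S i" using G lP by force
      have l0V: "l0 \<in> V" using l0 IH unfolding Inv_def by auto
      have sub: "\<Union>{S'. \<exists>l'. (l', S') \<in> S i \<and> l' \<in> P} \<subseteq> V" using IH unfolding Inv_def by force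
      have bnd: "d x l0 \<le> tau^Suc i*r0/2" if x: "x \<in> \<Union>{S'. \<exists>l'. (l', S') \<in> S i \<and> l' \<in> P}" for x
      proof -
        obtain l' S' where lS: "(l', S') \<in> S i" "l' \<in> P" "x \<in> S'" using x by blast
        have h1: "d x l' \<le> tau^i*r0/2" "l' \<in> V" "x \<in> V"
          using IH lS unfolding Inv_def by fastforce+
        have h2: "d l' l0 < c" using G lP lS(2) by force
        have "d x l0 \<le> d x l' + d l' l0" using dtri h1 l0V by blast
        also have "\<dots> \<le> tau^i*r0/2 + tau^Suc i*r0/2^eta" using h1 h2 c by linarith
        also have "\<dots> \<le> tau^Suc i*r0/2" using arith_step[OF assms(5) assms(6) r0] .
        finally show ?thesis .
      qed
      show ?thesis using pe l0V sub bnd by simp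
    qed
    have A2: "tau^Suc i*r0/2^eta \<le> d (fst p) (fst q)"
      if p: "p \<in> S (Suc i)" and q: "q \<in> S (Suc i)" and pq: "p \<noteq> q" for p q
    proof -
      obtain p0 where p0: "p0 \<in> P'" "fst p = fst p0" and pe: "p = (\<lambda>(l, P). (l, \<Union>{S'. \<exists>l'. (l', S') \<in> S i \<and> l' \<in> P})) p0"
        using p SS by (auto split: prod.splits)
      obtain q0 where q0: "q0 \<in> P'" "fst q = fst q0" and qe: "q = (\<lambda>(l, P). (l, \<Union>{S'. \<exists>l'. (l', S') \<in> S i \<and> l' \<in> P})) q0"
        using q SS by (auto split: prod.splits)
      have "p0 \<noteq> q0" using pe qe pq by auto
      then have "c \<le> d (fst p0) (fst q0) \<or> c \<le> d (fst q0) (fst p0)" using G p0 q0 by blast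
      moreover have "fst p0 \<in> V" using A1[OF p] p0(2) by simp
      moreover have "fst q0 \<in> V" using A1[OF q] q0(2) by simp
      ultimately have "c \<le> d (fst p0) (fst q0)" using dsym by metis
      then show ?thesis using p0 q0 c by simp
    qed
    show ?case unfolding Inv_def using A1 A2 by blast
  qed
  have I: "Inv j" using inv assms(9) .
  define rj where "rj = tau^j*r0"
  have rj: "rj > 0" unfolding rj_def using tpos r0 by simp
  have lV: "l \<in> V" and Tb: "\<forall>x\<in>T. d x l \<le> rj/2" "T \<subseteq> V"
    using I assms(10) unfolding Inv_def rj_def by fastforce+
  define X where "X = {T'. (\<exists>l'. (l', T') \<in> S j) \<and> knows d (tau ^ j * r0) T T'}"
  define f where "f T' = (SOME l'. (l', T') \<in> S j)" for T'
  have fX: "(f T', T') \<in> S j" if "T' \<in> X" for T'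
  proof -
    have "\<exists>l'. (l', T') \<in> S j" using that unfolding X_def by blast
    then show ?thesis unfolding f_def by (rule someI_ex)
  qed
  have sepj: "rj/2^eta \<le> d (fst p) (fst q)" if "p \<in> S j" "q \<in> S j" "p \<noteq> q" for p q
    using I that unfolding Inv_def rj_def by blast
  have injf: "inj_on f X"
  proof (rule inj_onI)
    fix a b assume ab: "a \<in> X" "b \<in> X" "f a = f b"
    show "a = b"
    proof (rule ccontr)
      assume "a \<noteq> b"
      then have "(f a, a) \<noteq> (f b, b)" by simp
      then have "rj/2^eta \<le> d (f a) (f a)" using sepj[OF fX[OF ab(1)] fX[OF ab(2)]] ab(3) by simp
      moreover have "f a \<in> V" using I fX[OF ab(1)] unfolding Inv_def by fastforce
      moreover have "(0::real) < rj/2^eta" using rj by simp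
      ultimately show False using d0 by fastforce
    qed
  qed
  define t where "t = rj / 2^(eta+1)"
  have t: "t > 0" unfolding t_def using rj by simp
  have rad: "2^(eta+2) * t = 2 * rj" unfolding t_def by (simp add: power_add)
  have sep2: "2 * t = rj / 2^eta" unfolding t_def by simp
  have sub: "f ` X \<subseteq> oball V d l (2^(eta+2) * t)"
  proof
    fix a assume "a \<in> f ` X"
    then obtain T' where T': "T' \<in> X" "a = f T'" by blast
    have pa: "(a, T') \<in> S j" using fX[OF T'(1)] T'(2) by simp
    have aV: "a \<in> V" and Ta: "\<forall>x\<in>T'. d x a \<le> rj/2" "T' \<subseteq> V"
      using I pa unfolding Inv_def rj_def by fastforce+
    obtain v u where vu: "v \<in> T" "u \<in> T'" "d v u < rj"
      using T'(1) unfolding X_def knows_def rj_def by blast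
    have vV: "v \<in> V" "u \<in> V" using vu Tb Ta by auto
    have "d a l \<le> d a u + d u l" using dtri aV vV lV by blast
    also have "d u l \<le> d u v + d v l" using dtri aV vV lV by blast
    finally have "d a l \<le> d a u + (d u v + d v l)" by simp
    moreover have "d a u = d u a" "d u v = d v u" using dsym aV vV by auto
    moreover have "d u a \<le> rj/2" "d v l \<le> rj/2" using Ta Tb vu by auto
    ultimately have "d a l < 2 * rj" using vu(3) by linarith
    then show "a \<in> oball V d l (2^(eta+2) * t)" unfolding rad oball_def using aV by simp
  qed
  have sepA: "\<forall>a\<in>f ` X. \<forall>b\<in>f ` X. a \<noteq> b \<longrightarrow> 2*t \<le> d a b"
  proof (intro ballI impI)
    fix a b assume a: "a \<in> f ` X" and b: "b \<in> f ` X" and ab: "a \<noteq> b"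
    obtain A where A: "A \<in> X" "a = f A" using a by blast
    obtain B where B: "B \<in> X" "b = f B" using b by blast
    have "(a, A) \<noteq> (b, B)" using ab by simp
    then show "2*t \<le> d a b" using sepj[OF fX[OF A(1)] fX[OF B(1)]] A B sep2 by simp
  qed
  have "card (f ` X) \<le> lam^(eta+2)" by (rule packing[OF fin met dbl lV t sub sepA])
  then have cX: "card X \<le> lam^(eta+2)" using card_image[OF injf] by simp
  have lam1: "lam \<ge> 1"
  proof -
    obtain W where W: "W \<subseteq> V" "card W \<le> lam" "oball V d l (2 * 1) \<subseteq> (\<Union>w\<in>W. oball V d w 1)"
      using dbl[unfolded doubling_def, rule_format, OF lV, of 1] by auto
    have "l \<in> oball V d l (2 * 1)" using lV d0 unfolding oball_def by simp
    then have "W \<noteq> {}" using W(3) by blast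
    moreover have "finite W" using W(1) fin finite_subset by blast
    ultimately show ?thesis using W(2) card_gt_0_iff[of W] by linarith
  qed
  have "lam^(eta+2) \<le> lam^(3+eta)" using lam1 by (intro power_increasing) auto
  then show ?thesis using cX unfolding X_def by simp
qed

end
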